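(* Let $t\in\mathbb{R}$ and $0\le\beta\le1$. Define polynomials $B^*_n(t,\beta;x)$ by $$\sum_{n=0}^\infty B^*_n(t,\beta;x)\frac{z^n}{n!}=\left(\frac{z}{\beta(e^z-1)+(1-\beta)z}\right)^te^{xz}$$ for $z$ in a neighborhood of $0$. Then for every $n\in\mathbb{N}_0$, $$B^*_n(t,\beta;0)=\sum_{m=0}^n\binom{-t}{m}\beta^m\sum_{k=0}^m\binom mk(-1)^{m-k}\frac{S(n+k,k)}{\binom{n+k}{n}}.$$ *)

theory Defs
  imports "HOL-Analysis.Analysis" "HOL-Combinatorics.Stirling"
begin

end

theory Submission
  imports Defs
begin

lemma stirling_fps:
  "fps_nth ((fps_exp (1::real) - 1) ^ k) N = fact k * real (Stirling N k) / fact N"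
proof (induction N arbitrary: k)
  case 0
  then show ?case by (cases k) (simp_all add: fps_power_zeroth)
next
  case (Suc N)
  define E where "E = fps_exp (1::real) - 1"
  show ?case
  proof (cases k)
    case 0
    then show ?thesis by simp
  next
    case (Suc j)
    have d: "fps_deriv (E ^ Suc j) = fps_const (of_nat (Suc j)) * (E ^ Suc j + E ^ j)"
      unfolding fps_deriv_power' E_def fps_of_nat[symmetric] by (simp add: algebra_simps)
    have "fps_nth (fps_deriv (E ^ Suc j)) N = of_nat (Suc j) * (fps_nth (E ^ Suc j) N + fps_nth (E^j) N)"
      by (subst d) simp
    moreover have "real (Suc N) * fps_nth (E ^ Suc j) (Suc N) = fps_nth (fps_deriv (E ^ Suc j)) N"
      unfolding fps_deriv_nth by simp
    ultimately have eq: "real (Suc N) * fps_nth (E ^ Suc j) (Suc N) = real (Suc j) * (fps_nth (E ^ Suc j) N + fps_nth (E^j) N)"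
      by simp
    have IH1: "fps_nth (E ^ Suc j) N = fact (Suc j) * real (Stirling N (Suc j)) / fact N"
      using Suc.IH E_def by blast
    have IH2: "fps_nth (E ^ j) N = fact j * real (Stirling N j) / fact N"
      using Suc.IH E_def by blast
    have "fps_nth (E ^ Suc j) (Suc N) = real (Suc j) * (fps_nth (E ^ Suc j) N + fps_nth (E^j) N) / real (Suc N)"
      using eq by (simp add: field_simps del: of_nat_Suc)
    also have "\<dots> = fact (Suc j) * real (Stirling (Suc N) (Suc j)) / fact (Suc N)"
      unfolding IH1 IH2 by (simp add: field_simps)
    finally show ?thesis using \<open>k = Suc j\<close> E_def by simp
  qed
qed

lemma F_times_X: "fps_shift 1 (fps_exp (1::real) - 1) * fps_X = fps_exp 1 - 1"
  by (intro fps_ext) auto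

lemma F_pow_nth:
  "fps_nth (fps_shift 1 (fps_exp (1::real) - 1) ^ k) n = fact k * real (Stirling (n+k) k) / fact (n+k)"
proof -
  define F where "F = fps_shift 1 (fps_exp (1::real) - 1)"
  have "(fps_exp (1::real) - 1) ^ k = F ^ k * fps_X ^ k"
    using F_times_X[folded F_def] by (metis power_mult_distrib)
  hence "fps_nth ((fps_exp (1::real) - 1) ^ k) (n+k) = fps_nth (F ^ k) n"
    by (simp add: fps_X_power_mult_right_nth)
  thus ?thesis unfolding F_def stirling_fps by simp
qed

lemma neg1_pow_fps: "(- 1 :: real fps) ^ j = fps_const ((-1)^j)"
  by (induction j) (auto simp: fps_const_neg[symmetric] fps_const_mult[symmetric] simp del: fps_const_neg fps_const_mult)

lemma W_pow_nth:
  fixes \<beta> :: real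
  shows "fps_nth ((fps_const \<beta> * (fps_shift 1 (fps_exp (1::real) - 1) - 1)) ^ m) n =
    \<beta> ^ m * (\<Sum>k=0..m. real (m choose k) * (-1) ^ (m - k) * (fact k * real (Stirling (n+k) k) / fact (n+k)))"
proof -
  define F where "F = fps_shift 1 (fps_exp (1::real) - 1)"
  have "(F - 1) ^ m = (F + (-1)) ^ m" by simp
  also have "\<dots> = (\<Sum>k\<le>m. of_nat (m choose k) * F ^ k * (-1) ^ (m - k))"
    by (rule binomial_ring)
  also have "\<dots> = (\<Sum>k=0..m. fps_const (real (m choose k) * (-1) ^ (m - k)) * F ^ k)"
    unfolding atLeast0AtMost
    by (intro sum.cong refl) (simp add: fps_of_nat[symmetric] neg1_pow_fps mult_ac)
  finally have "fps_nth ((F - 1) ^ m) n = (\<Sum>k=0..m. real (m choose k) * (-1) ^ (m - k) * fps_nth (F ^ k) n)"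
    by (simp add: fps_sum_nth)
  moreover have "(fps_const \<beta> * (F - 1)) ^ m = fps_const (\<beta> ^ m) * (F - 1) ^ m"
    by (simp add: power_mult_distrib)
  ultimately show ?thesis unfolding F_def[symmetric] using F_pow_nth[folded F_def] by simp
qed

lemma powser_zero_unique:
  fixes a :: "nat \<Rightarrow> real"
  assumes rho: "\<rho> > 0" and S: "\<And>z. z \<noteq> 0 \<Longrightarrow> \<bar>z\<bar> < \<rho> \<Longrightarrow> (\<lambda>k. a k * z^k) sums 0"
  shows "a n = 0"
proof -
  define A where "A = Abs_fps a"
  have "summable (\<lambda>k. a k * (\<rho>/2)^k)" using S[of "\<rho>/2"] rho by (simp add: sums_iff)
  hence "conv_radius a \<ge> norm (\<rho>/2)" by (rule conv_radius_geI)
  hence rad: "fps_conv_radius A \<ge> ereal (\<rho>/2)" using rho by (simp add: A_def fps_conv_radius_def)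
  show ?thesis
  proof (rule ccontr)
    assume "a n \<noteq> 0"
    hence A0: "A \<noteq> 0" by (auto simp: A_def fps_eq_iff)
    define k where "k = subdegree A"
    define T where "T = fps_shift k A"
    have evA: "eval_fps A z = 0" if "z \<noteq> 0" "\<bar>z\<bar> < \<rho>/2" for z
    proof -
      have "norm z < fps_conv_radius A" using that by (intro order_less_le_trans[OF _ rad]) simp
      hence "(\<lambda>k. a k * z^k) sums eval_fps A z" using sums_eval_fps[of z A] by (simp add: A_def)
      moreover have "(\<lambda>k. a k * z^k) sums 0" using S that by simp
      ultimately show ?thesis using sums_unique2 by blast
    qed
    have evT: "eval_fps T z = 0" if "z \<noteq> 0" "\<bar>z\<bar> < \<rho>/2" for z
    proof -
      have "norm z < fps_conv_radius A" using that by (intro order_less_le_trans[OF _ rad]) simp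
      thus ?thesis unfolding T_def using eval_fps_shift[of k A z] evA[OF that] that by (simp add: k_def)
    qed
    have "eventually (\<lambda>z. eval_fps T z = 0) (at (0::real))"
      unfolding eventually_at using rho evT by (intro exI[of _ "\<rho>/2"]) auto
    hence lim0: "(eval_fps T \<longlongrightarrow> 0) (at 0)" by (rule tendsto_eventually)
    have "norm (0::real) < fps_conv_radius T" using rad rho unfolding T_def
      by (metis fps_conv_radius_shift half_gt_zero_iff less_ereal.simps(1) norm_zero order_less_le_trans zero_ereal_def)
    hence "isCont (eval_fps T) 0" by (rule continuous_eval_fps)
    hence "(eval_fps T \<longlongrightarrow> eval_fps T 0) (at 0)" by (simp add: isCont_def)
    hence "eval_fps T 0 = 0" using lim0 tendsto_unique trivial_limit_at by blast
    moreover have "eval_fps T 0 = fps_nth A k" by (simp add: eval_fps_at_0 T_def)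
    ultimately show False using A0 k_def by simp
  qed
qed

definition Wf :: "real \<Rightarrow> real fps" where
  "Wf \<beta> = fps_const \<beta> * (fps_shift 1 (fps_exp (1::real) - 1) - 1)"

lemma Wf_rad: "fps_conv_radius (Wf \<beta>) = \<infinity>"
proof -
  have "fps_conv_radius (fps_exp (1::real) - 1) \<ge> min \<infinity> \<infinity>"
    using fps_conv_radius_diff[of "fps_exp (1::real)" 1] by simp
  hence r1: "fps_conv_radius (fps_exp (1::real) - 1) = \<infinity>" by simp
  have "fps_conv_radius (fps_shift 1 (fps_exp (1::real) - 1) - 1) \<ge> min \<infinity> \<infinity>"
    using fps_conv_radius_diff[of "fps_shift 1 (fps_exp (1::real) - 1)" 1] r1 by simp
  hence r2: "fps_conv_radius (fps_shift 1 (fps_exp (1::real) - 1) - 1) = \<infinity>" by simp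
  have "fps_conv_radius (Wf \<beta>) \<ge> min \<infinity> \<infinity>"
    using fps_conv_radius_mult[of "fps_const \<beta>" "fps_shift 1 (fps_exp (1::real) - 1) - 1"] r2
    by (simp add: Wf_def)
  thus ?thesis by simp
qed

lemma Wf_nth: "fps_nth (Wf \<beta>) j = (if j = 0 then 0 else \<beta> / fact (Suc j))"
  by (simp add: Wf_def algebra_simps)

lemma Wf_pow_nonneg:
  assumes "\<beta> \<ge> 0" shows "fps_nth (Wf \<beta> ^ m) n \<ge> 0"
proof (induction m arbitrary: n)
  case 0 thus ?case by simp
next
  case (Suc m)
  show ?case unfolding power_Suc fps_mult_nth
    using Suc.IH assms by (intro sum_nonneg mult_nonneg_nonneg) (auto simp: Wf_nth)
qed

lemma Wf_pow_below:
  assumes "n < m" shows "fps_nth (Wf \<beta> ^ m) n = 0"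
proof (cases "Wf \<beta> = 0")
  case True thus ?thesis using assms by (simp add: zero_power)
next
  case False
  hence "subdegree (Wf \<beta>) \<noteq> 0" by (simp add: subdegree_eq_0_iff Wf_nth)
  hence "m \<le> m * subdegree (Wf \<beta>)" by simp
  hence "n < m * subdegree (Wf \<beta>)" using assms by linarith
  thus ?thesis by (rule fps_pow_nth_below_subdegree)
qed

lemma E_subdeg: "1 \<le> subdegree (fps_exp (1::real) - 1)"
proof -
  have "fps_nth (fps_exp (1::real) - 1) 1 = 1" by simp
  hence "fps_exp (1::real) - 1 \<noteq> 0" by (metis fps_zero_nth zero_neq_one)
  moreover have "fps_nth (fps_exp (1::real) - 1) 0 = 0" by simp
  ultimately show ?thesis by (metis One_nat_def Suc_leI neq0_conv subdegree_eq_0_iff)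
qed

lemma Wf_eval:
  assumes "z \<noteq> 0" shows "eval_fps (Wf \<beta>) z = \<beta> * ((exp z - 1) / z - 1)"
proof -
  have s: "eval_fps (fps_shift 1 (fps_exp (1::real) - 1)) z = (exp z - 1) / z"
  proof -
    have r1: "fps_conv_radius (fps_exp (1::real) - 1) \<ge> min \<infinity> \<infinity>"
      using fps_conv_radius_diff[of "fps_exp (1::real)" 1] by simp
    have "eval_fps (fps_shift 1 (fps_exp (1::real) - 1)) z = eval_fps (fps_exp (1::real) - 1) z / z"
      using assms r1 E_subdeg by (subst eval_fps_shift) auto
    also have "\<dots> = (exp z - 1) / z" using r1 by (subst eval_fps_diff) auto
    finally show ?thesis .
  qed
  have r2: "fps_conv_radius (fps_shift 1 (fps_exp (1::real) - 1)) = \<infinity>"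
    using fps_conv_radius_diff[of "fps_exp (1::real)" 1] by simp
  have "eval_fps (Wf \<beta>) z = eval_fps (fps_const \<beta>) z * eval_fps (fps_shift 1 (fps_exp (1::real) - 1) - 1) z"
    unfolding Wf_def using r2 fps_conv_radius_diff[of "fps_shift 1 (fps_exp (1::real) - 1)" 1]
    by (intro eval_fps_mult) auto
  also have "eval_fps (fps_shift 1 (fps_exp (1::real) - 1) - 1) z = (exp z - 1) / z - 1"
    using r2 s by (subst eval_fps_diff) auto
  finally show ?thesis by simp
qed

lemma comp_sums:
  fixes \<beta> t z :: real
  assumes b: "\<beta> \<ge> 0" and w1: "eval_fps (Wf \<beta>) \<bar>z\<bar> < 1" and w2: "\<bar>eval_fps (Wf \<beta>) z\<bar> < 1"
  shows "(\<lambda>n. (\<Sum>m=0..n. ((-t) gchoose m) * fps_nth (Wf \<beta> ^ m) n) * z^n) sums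
           ((1 + eval_fps (Wf \<beta>) z) powr (-t))"
proof -
  define W where "W = Wf \<beta>"
  define c where "c m = (-t) gchoose m" for m
  define x where "x = \<bar>z\<bar>"
  define w where "w = eval_fps W x"
  define e where "e = eval_fps W z"
  define p where "p = (\<lambda>(m,n). \<bar>c m\<bar> * fps_nth (W^m) n * x^n)"
  define a where "a = (\<lambda>(m,n). c m * fps_nth (W^m) n * z^n)"
  have nn: "fps_nth (W^m) n \<ge> 0" for m n unfolding W_def using b by (rule Wf_pow_nonneg)
  have rad: "ereal (norm y) < fps_conv_radius (W^m)" for y :: real and m
  proof -
    have "fps_conv_radius (W^m) \<ge> fps_conv_radius W" by (rule fps_conv_radius_power)
    thus ?thesis by (simp add: W_def Wf_rad)
  qed
  have radW: "ereal (norm y) < fps_conv_radius W" for y :: real using rad[of y 1] by simp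
  have w0: "w \<ge> 0"
  proof -
    have sw: "(\<lambda>n. fps_nth W n * x^n) sums w" unfolding w_def by (rule sums_eval_fps[OF radW])
    have "0 \<le> fps_nth W n * x^n" for n
      using nn[of 1 n] unfolding x_def power_one_right by (intro mult_nonneg_nonneg zero_le_power) auto
    thus ?thesis using sums_le[OF _ sums_zero sw] by blast
  qed
  have w_1: "w < 1" using w1 unfolding w_def W_def x_def .
  have inner_p: "((\<lambda>n. p (m,n)) has_sum (\<bar>c m\<bar> * w^m)) UNIV" for m
  proof -
    have "(\<lambda>n. fps_nth (W^m) n * x^n) sums eval_fps (W^m) x" by (rule sums_eval_fps[OF rad])
    also have "eval_fps (W^m) x = w^m" unfolding w_def by (rule eval_fps_power[OF radW])
    finally have "(\<lambda>n. \<bar>c m\<bar> * (fps_nth (W^m) n * x^n)) sums (\<bar>c m\<bar> * w^m)" by (rule sums_mult)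
    hence "((\<lambda>n. \<bar>c m\<bar> * (fps_nth (W^m) n * x^n)) has_sum (\<bar>c m\<bar> * w^m)) UNIV"
      by (rule sums_nonneg_imp_has_sum) (use nn in \<open>auto simp: x_def\<close>)
    thus ?thesis by (simp add: p_def mult.assoc)
  qed
  have outer_p: "(\<lambda>m. \<bar>c m\<bar> * w^m) summable_on UNIV"
  proof -
    have "ereal (norm w) < fps_conv_radius (fps_binomial (-t))"
      using w0 w_1 by (auto simp: fps_conv_radius_binomial)
    hence "summable (\<lambda>m. norm (fps_nth (fps_binomial (-t)) m * w^m))" by (rule norm_summable_fps)
    hence "summable (\<lambda>m. \<bar>c m\<bar> * w^m)" using w0 by (simp add: c_def abs_mult power_abs)
    thus ?thesis by (rule summable_nonneg_imp_summable_on) (use w0 in auto)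
  qed
  have p_sum: "p summable_on (UNIV \<times> UNIV)"
    using summable_on_SigmaI[of UNIV p "\<lambda>_. UNIV" "\<lambda>m. \<bar>c m\<bar> * w^m", OF inner_p outer_p]
    using nn by (force simp: p_def x_def)
  have p_abs: "(\<lambda>x. norm (p x)) summable_on UNIV \<times> UNIV"
    using summable_on_iff_abs_summable_on_real[of p] p_sum by blast
  have a_abs: "(\<lambda>x. norm (a x)) summable_on UNIV \<times> UNIV"
  proof (rule Infinite_Sum.abs_summable_on_comparison_test[OF p_abs])
    show "norm (a mn) \<le> norm (p mn)" for mn
      using nn by (cases mn) (simp add: a_def p_def x_def abs_mult power_abs)
  qed
  have a_sum: "a summable_on (UNIV \<times> UNIV)" using a_abs by (rule abs_summable_summable)
  define S where "S = infsum a (UNIV \<times> UNIV)"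
  have aS: "(a has_sum S) (UNIV \<times> UNIV)" using a_sum by (simp add: S_def has_sum_infsum)
  have inner_a: "((\<lambda>n. a (m,n)) has_sum (c m * e^m)) UNIV" for m
  proof -
    have "(\<lambda>n. fps_nth (W^m) n * z^n) sums eval_fps (W^m) z" by (rule sums_eval_fps[OF rad])
    also have "eval_fps (W^m) z = e^m" unfolding e_def by (rule eval_fps_power[OF radW])
    finally have "(\<lambda>n. c m * (fps_nth (W^m) n * z^n)) sums (c m * e^m)" by (rule sums_mult)
    moreover have "summable (\<lambda>n. norm (c m * (fps_nth (W^m) n * z^n)))"
      using norm_summable_fps[OF rad[of z m]] summable_mult[of _ "\<bar>c m\<bar>"]
      by (simp add: abs_mult mult.assoc)
    ultimately have "((\<lambda>n. c m * (fps_nth (W^m) n * z^n)) has_sum (c m * e^m)) UNIV"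
      by (intro norm_summable_imp_has_sum)
    thus ?thesis by (simp add: a_def mult.assoc)
  qed
  have "((\<lambda>m. c m * e^m) has_sum S) UNIV"
    by (rule has_sum_Sigma'[OF aS inner_a])
  hence "(\<lambda>m. c m * e^m) sums S" by (rule has_sum_imp_sums)
  moreover have "(\<lambda>m. c m * e^m) sums ((1 + e) powr (-t))"
    unfolding c_def by (rule gen_binomial_real) (use w2 in \<open>simp add: e_def W_def\<close>)
  ultimately have S_eq: "S = (1 + e) powr (-t)" by (rule sums_unique2)
  have aS': "((\<lambda>(n,m). a (m,n)) has_sum S) (UNIV \<times> UNIV)"
    using aS has_sum_swap[where f=a and A=UNIV and B=UNIV] by (simp only: UNIV_Times_UNIV)
  have inner_a': "((\<lambda>m. a (m,n)) has_sum ((\<Sum>m=0..n. c m * fps_nth (W^m) n) * z^n)) UNIV" for n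
  proof (rule has_sum_finite_neutralI[of "{0..n}"])
    show "a (m, n) = 0" if "m \<in> UNIV - {0..n}" for m
      using that Wf_pow_below[of n m \<beta>] by (simp add: a_def W_def)
    show "(\<Sum>m=0..n. c m * fps_nth (W^m) n) * z^n = (\<Sum>m\<in>{0..n}. a (m,n))"
      by (simp add: a_def sum_distrib_right)
  qed auto
  have "((\<lambda>n. (\<Sum>m=0..n. c m * fps_nth (W^m) n) * z^n) has_sum S) UNIV"
    using has_sum_Sigma'[OF aS', of "\<lambda>n. (\<Sum>m=0..n. c m * fps_nth (W^m) n) * z^n"] inner_a'
    by (simp add: case_prod_beta)
  hence "(\<lambda>n. (\<Sum>m=0..n. c m * fps_nth (W^m) n) * z^n) sums S" by (rule has_sum_imp_sums)
  thus ?thesis unfolding S_eq e_def c_def W_def .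
qed

lemma binom_aux: "real ((n+k) choose n) = fact (n+k) / (fact n * fact k)"
  using binomial_fact[of n "n+k", where 'a=real] by simp

lemma coeff_final:
  fixes \<beta> t :: real
  shows "fact n * (\<Sum>m=0..n. ((-t) gchoose m) * fps_nth (Wf \<beta> ^ m) n) =
    (\<Sum>m=0..n. ((- t) gchoose m) * \<beta> ^ m *
           (\<Sum>k=0..m. real (m choose k) * (-1) ^ (m - k) *
              real (Stirling (n + k) k) / real ((n + k) choose n)))"
proof -
  define G where "G k = fact k * real (Stirling (n+k) k) / fact (n+k)" for k
  have f1: "fact n * G k = real (Stirling (n + k) k) / real ((n + k) choose n)" for k
    unfolding binom_aux G_def by (simp add: field_simps)
  have "fps_nth (Wf \<beta> ^ m) n = \<beta> ^ m * (\<Sum>k=0..m. real (m choose k) * (-1) ^ (m - k) * G k)" for m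
    unfolding Wf_def W_pow_nth G_def ..
  hence "fact n * (\<Sum>m=0..n. ((-t) gchoose m) * fps_nth (Wf \<beta> ^ m) n) =
     (\<Sum>m=0..n. ((-t) gchoose m) * \<beta> ^ m * (\<Sum>k=0..m. real (m choose k) * (-1) ^ (m - k) * (fact n * G k)))"
    by (simp add: sum_distrib_left mult.left_commute mult.assoc)
  also have "\<dots> = (\<Sum>m=0..n. ((- t) gchoose m) * \<beta> ^ m *
           (\<Sum>k=0..m. real (m choose k) * (-1) ^ (m - k) *
              real (Stirling (n + k) k) / real ((n + k) choose n)))"
    unfolding f1 by simp
  finally show ?thesis .
qed

theorem corollary4p4:
  fixes t \<beta> :: real and B :: "nat \<Rightarrow> real \<Rightarrow> real" and n :: nat
  assumes "0 \<le> \<beta>" and "\<beta> \<le> 1"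
    and gen: "\<And>x. \<exists>\<delta>>0. \<forall>z::real. z \<noteq> 0 \<and> \<bar>z\<bar> < \<delta> \<longrightarrow>
        (\<lambda>k. B k x * z ^ k / fact k) sums
          ((z / (\<beta> * (exp z - 1) + (1 - \<beta>) * z)) powr t * exp (x * z))"
  shows "B n 0 = (\<Sum>m=0..n. ((- t) gchoose m) * \<beta> ^ m *
           (\<Sum>k=0..m. real (m choose k) * (-1) ^ (m - k) *
              real (Stirling (n + k) k) / real ((n + k) choose n)))"
proof -
  define W where "W = Wf \<beta>"
  define q where "q n = (\<Sum>m=0..n. ((-t) gchoose m) * fps_nth (W ^ m) n)" for n
  obtain \<delta> where d: "\<delta> > 0" and gd: "\<And>z. z \<noteq> 0 \<Longrightarrow> \<bar>z\<bar> < \<delta> \<Longrightarrow>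
        (\<lambda>k. B k 0 * z ^ k / fact k) sums ((z / (\<beta> * (exp z - 1) + (1 - \<beta>) * z)) powr t)"
    using gen[of 0] by auto
  have "isCont (eval_fps W) 0"
    by (rule continuous_eval_fps) (simp add: W_def Wf_rad)
  moreover have "eval_fps W 0 = 0" by (simp add: eval_fps_at_0 W_def Wf_nth)
  ultimately have "(eval_fps W \<midarrow>0\<rightarrow> 0)" by (simp add: isCont_def)
  from LIM_D[OF this, of 1] obtain r where r: "r > 0"
    and rr: "\<And>x. x \<noteq> 0 \<and> norm (x - 0) < r \<Longrightarrow> norm (eval_fps W x - 0) < 1" by auto
  have r1: "\<bar>eval_fps W x\<bar> < 1" if "\<bar>x\<bar> < r" for x
    using rr[of x] that \<open>eval_fps W 0 = 0\<close> by (cases "x = 0") auto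
  define \<rho> where "\<rho> = min \<delta> r"
  have "B n 0 / fact n - q n = 0"
  proof (rule powser_zero_unique[of \<rho>])
    show "\<rho> > 0" using d r by (simp add: \<rho>_def)
  next
    fix z :: real assume z: "z \<noteq> 0" "\<bar>z\<bar> < \<rho>"
    have e1: "\<bar>eval_fps W z\<bar> < 1" using r1 z by (simp add: \<rho>_def)
    have e2: "eval_fps W \<bar>z\<bar> < 1" using r1[of "\<bar>z\<bar>"] z by (simp add: \<rho>_def)
    have s1: "(\<lambda>n. q n * z^n) sums ((1 + eval_fps W z) powr (-t))"
      unfolding q_def W_def using comp_sums[OF assms(1)] e1 e2 by (simp add: W_def)
    have s2: "(\<lambda>k. B k 0 * z ^ k / fact k) sums ((z / (\<beta> * (exp z - 1) + (1 - \<beta>) * z)) powr t)"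
      using gd z by (simp add: \<rho>_def)
    have pos: "1 + eval_fps W z > 0" using e1 by linarith
    have ev: "eval_fps W z = \<beta> * ((exp z - 1) / z - 1)" unfolding W_def using z(1) by (rule Wf_eval)
    have D: "\<beta> * (exp z - 1) + (1 - \<beta>) * z = z * (1 + eval_fps W z)"
      unfolding ev using z(1) by (simp add: field_simps)
    have "z / (\<beta> * (exp z - 1) + (1 - \<beta>) * z) = inverse (1 + eval_fps W z)"
      unfolding D using z(1) by (simp add: divide_inverse)
    hence V: "(z / (\<beta> * (exp z - 1) + (1 - \<beta>) * z)) powr t = (1 + eval_fps W z) powr (-t)"
      by (simp only: inverse_powr powr_minus)
    have "(\<lambda>k. B k 0 * z ^ k / fact k - q k * z^k) sums ((1 + eval_fps W z) powr (-t) - (1 + eval_fps W z) powr (-t))"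
      using sums_diff[OF s2[unfolded V] s1] .
    thus "(\<lambda>k. (B k 0 / fact k - q k) * z ^ k) sums 0"
      by (simp add: algebra_simps)
  qed
  hence "B n 0 = fact n * q n" by (simp add: field_simps)
  also have "\<dots> = (\<Sum>m=0..n. ((- t) gchoose m) * \<beta> ^ m *
           (\<Sum>k=0..m. real (m choose k) * (-1) ^ (m - k) *
              real (Stirling (n + k) k) / real ((n + k) choose n)))"
    unfolding q_def W_def by (rule coeff_final)
  finally show ?thesis .
qed

end
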